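(* Consider the Biased Preferential Attachment Model (BPAM) with two communities, minority ratio $r$ and homophily parameter $\rho$, with asymptotic red edge fraction $\alpha$ and quantities $q_{BB}, q_{RB}$ and $\tilde d^{in}_t(B)$ as defined in the context. For every integer $t \geq 2$ the multiplicative factors $MF^{(t)}(B) = q_{BB}\,\tilde d^{in}_t(B)$ and $MF^{(t)}(R) = q_{RB}\,\tilde d^{in}_t(B)$ satisfy $$MF^{(t)}(B) \geq MF^{(t)}(R)$$ for all $0 \leq r \leq 0.5$ and all $0 \leq \rho \leq 1$.
   Context: The BPAM with two communities (red $R$, blue $B$) grows a directed network one node at a time. A new node $u$ is labeled $R$ with probability $r$ and $B$ with probability $1-r$, where $0\le r\le 1/2$, so red is the minority. The node $u$ then picks a target $v$ with probability proportional to its current degree, $\mathbb{P}(v \text{ chosen}) = d_t(v)/\sum_{w} d_t(w)$. If $u$ and $v$ have the same label, the directed edge $(u,v)$ is created. If the labels differ, the edge is accepted with probability $\rho\in[0,1]$, and otherwise the choice is repeated until an edge is formed. This process is repeated $d$ times, so that every node has outdegree $d$. The network has $N$ nodes. Let $\alpha_N$ be the total degree of red nodes divided by the total degree $2Nd$, and let $\alpha=\lim_{N\to\infty}\mathbb{E}[\alpha_N]$. It is known that $\alpha<r$ (the power inequality). Define $$p^{out}_{RB}=\frac{\rho(1-\alpha)}{\alpha+\rho(1-\alpha)},\qquad p^{out}_{BB}=\frac{1-\alpha}{\rho\alpha+1-\alpha}.$$ Let $D_B=\frac{r\rho}{\alpha+\rho(1-\alpha)}+\frac{1-r}{\alpha\rho+1-\alpha}$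 and $D_R=\frac{r}{\alpha+\rho(1-\alpha)}+\frac{\rho(1-r)}{\alpha\rho+1-\alpha}$. Define $$p^{in}_{BB}=\frac{(1-r)/(\alpha\rho+1-\alpha)}{D_B},\qquad p^{in}_{BR}=\frac{\rho r/(\alpha+\rho(1-\alpha))}{D_B},$$ $$p^{in}_{RR}=\frac{r/(\alpha+\rho(1-\alpha))}{D_R},\qquad p^{in}_{RB}=\frac{\rho(1-r)/(\alpha\rho+1-\alpha)}{D_R}.$$ Set $$q_{BB}=p^{in}_{BB}p^{out}_{BB}+p^{in}_{BR}p^{out}_{RB},\qquad q_{RB}=p^{in}_{RB}p^{out}_{BB}+p^{in}_{RR}p^{out}_{RB}.$$ These are the probabilities that a node of color $B$ (respectively $R$) has an in-neighbor which in turn has an out-edge to a blue node. The size-biased $t$-th indegree moment of the blue community is $$\tilde d^{in}_t(B)=\frac{\sum_{u\in B}(d^{in}(u))^t}{\sum_{u\in B}d^{in}(u)}.$$ In the paper's mean-field analysis of HITS, the authority score after $t$ iterations is approximated by $a^{(t)}(v\in C)\approx d^{in}(v)(d-1)MF^{(t)}(C)$. Here the multiplicative factors are $MF^{(t)}(R)=q_{RB}\tilde d^{in}_t(B)$ and $MF^{(t)}(B)=q_{BB}\tilde d^{in}_t(B)$. *)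

theory Defs
  imports Complex_Main
begin

definition p_out_RB :: "real \<Rightarrow> real \<Rightarrow> real" where
  "p_out_RB rho \<alpha> = rho * (1 - \<alpha>) / (\<alpha> + rho * (1 - \<alpha>))"

definition p_out_BB :: "real \<Rightarrow> real \<Rightarrow> real" where
  "p_out_BB rho \<alpha> = (1 - \<alpha>) / (rho * \<alpha> + 1 - \<alpha>)"

definition D_B :: "real \<Rightarrow> real \<Rightarrow> real \<Rightarrow> real" where
  "D_B r rho \<alpha> = r * rho / (\<alpha> + rho * (1 - \<alpha>)) + (1 - r) / (\<alpha> * rho + 1 - \<alpha>)"

definition D_R :: "real \<Rightarrow> real \<Rightarrow> real \<Rightarrow> real" where
  "D_R r rho \<alpha> = r / (\<alpha> + rho * (1 - \<alpha>)) + rho * (1 - r) / (\<alpha> * rho + 1 - \<alpha>)"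

definition p_in_BB :: "real \<Rightarrow> real \<Rightarrow> real \<Rightarrow> real" where
  "p_in_BB r rho \<alpha> = ((1 - r) / (\<alpha> * rho + 1 - \<alpha>)) / D_B r rho \<alpha>"

definition p_in_BR :: "real \<Rightarrow> real \<Rightarrow> real \<Rightarrow> real" where
  "p_in_BR r rho \<alpha> = (rho * r / (\<alpha> + rho * (1 - \<alpha>))) / D_B r rho \<alpha>"

definition p_in_RR :: "real \<Rightarrow> real \<Rightarrow> real \<Rightarrow> real" where
  "p_in_RR r rho \<alpha> = (r / (\<alpha> + rho * (1 - \<alpha>))) / D_R r rho \<alpha>"

definition p_in_RB :: "real \<Rightarrow> real \<Rightarrow> real \<Rightarrow> real" where
  "p_in_RB r rho \<alpha> = (rho * (1 - r) / (\<alpha> * rho + 1 - \<alpha>)) / D_R r rho \<alpha>"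

definition q_BB :: "real \<Rightarrow> real \<Rightarrow> real \<Rightarrow> real" where
  "q_BB r rho \<alpha> = p_in_BB r rho \<alpha> * p_out_BB rho \<alpha> + p_in_BR r rho \<alpha> * p_out_RB rho \<alpha>"

definition q_RB :: "real \<Rightarrow> real \<Rightarrow> real \<Rightarrow> real" where
  "q_RB r rho \<alpha> = p_in_RB r rho \<alpha> * p_out_BB rho \<alpha> + p_in_RR r rho \<alpha> * p_out_RB rho \<alpha>"

definition sb_moment :: "'v set \<Rightarrow> ('v \<Rightarrow> nat) \<Rightarrow> nat \<Rightarrow> real" where
  "sb_moment Bc indeg t = (\<Sum>u\<in>Bc. real (indeg u) ^ t) / (\<Sum>u\<in>Bc. real (indeg u))"

definition MF_B :: "real \<Rightarrow> real \<Rightarrow> real \<Rightarrow> 'v set \<Rightarrow> ('v \<Rightarrow> nat) \<Rightarrow> nat \<Rightarrow> real" where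
  "MF_B r rho \<alpha> Bc indeg t = q_BB r rho \<alpha> * sb_moment Bc indeg t"

definition MF_R :: "real \<Rightarrow> real \<Rightarrow> real \<Rightarrow> 'v set \<Rightarrow> ('v \<Rightarrow> nat) \<Rightarrow> nat \<Rightarrow> real" where
  "MF_R r rho \<alpha> Bc indeg t = q_RB r rho \<alpha> * sb_moment Bc indeg t"

end

theory Submission
  imports Defs
begin

lemma avg_lemma:
  fixes x y P Q rho :: real
  assumes "0 \<le> x" "0 < y" "0 \<le> rho" "rho \<le> 1" "Q \<le> P" "0 \<le> Q"
  shows "(rho * y * P + x * Q) / (x + rho * y) \<le> (y * P + rho * x * Q) / (rho * x + y)"
proof (cases "x + rho * y = 0")
  case True
  have "0 \<le> (y * P + rho * x * Q) / (rho * x + y)"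
    using assms by (intro divide_nonneg_nonneg) auto
  then show ?thesis using True by simp
next
  case False
  hence d1: "x + rho * y > 0" using assms by (smt (verit) mult_nonneg_nonneg)
  have d2: "rho * x + y > 0" using assms by (smt (verit) mult_nonneg_nonneg)
  have key: "(y * P + rho * x * Q) * (x + rho * y) - (rho * y * P + x * Q) * (rho * x + y)
      = x * y * (P - Q) * (1 - rho^2)" by (simp add: algebra_simps power2_eq_square)
  have "0 \<le> x * y * (P - Q) * (1 - rho^2)"
    using assms by (intro mult_nonneg_nonneg) (auto simp: power_le_one)
  hence "(rho * y * P + x * Q) * (rho * x + y) \<le> (y * P + rho * x * Q) * (x + rho * y)"
    using key by linarith
  then show ?thesis using d1 d2 by (simp add: divide_simps mult.commute)
qed

theorem proposition1:
  fixes r rho \<alpha> :: real and Bc :: "'v set" and indeg :: "'v \<Rightarrow> nat" and t :: nat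
  assumes "0 \<le> r" and "r \<le> 1/2"
    and "0 \<le> rho" and "rho \<le> 1"
    and "0 \<le> \<alpha>" and "\<alpha> \<le> r"
    and "finite Bc"
    and "t \<ge> 2"
  shows "MF_B r rho \<alpha> Bc indeg t \<ge> MF_R r rho \<alpha> Bc indeg t"
proof -
  define a where "a = \<alpha> + rho * (1 - \<alpha>)"
  define b where "b = \<alpha> * rho + 1 - \<alpha>"
  have a0: "a \<ge> 0" unfolding a_def using assms by (simp add: mult_nonneg_nonneg)
  have b0: "b > 0"
  proof -
    have "0 \<le> \<alpha> * rho" using assms by simp
    thus ?thesis unfolding b_def using assms by linarith
  qed
  have sb: "sb_moment Bc indeg t \<ge> 0" unfolding sb_moment_def
    by (intro divide_nonneg_nonneg sum_nonneg) auto
  have q: "q_RB r rho \<alpha> \<le> q_BB r rho \<alpha>"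
  proof -
    define x where "x = r / a"
    define y where "y = (1 - r) / b"
    define P where "P = (1 - \<alpha>) / b"
    define Q where "Q = rho * (1 - \<alpha>) / a"
    have x0: "x \<ge> 0" unfolding x_def using a0 assms by simp
    have y0: "y > 0" unfolding y_def using b0 assms by simp
    have Q0: "Q \<ge> 0" unfolding Q_def using a0 assms by simp
    have QP: "Q \<le> P"
    proof (cases "a = 0")
      case True
      then show ?thesis unfolding Q_def P_def using b0 assms by simp
    next
      case False
      hence ap: "a > 0" using a0 by simp
      have k1: "a - rho * b = \<alpha> * (1 - rho^2)"
        unfolding a_def b_def by (simp add: algebra_simps power2_eq_square)
      have k2: "0 \<le> \<alpha> * (1 - rho^2)"
        using assms by (intro mult_nonneg_nonneg) (auto simp: power_le_one)
      have "rho * b \<le> a" using k1 k2 by linarith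
      moreover have "0 \<le> 1 - \<alpha>" using assms by linarith
      ultimately have "(1 - \<alpha>) * (rho * b) \<le> (1 - \<alpha>) * a" by (rule mult_left_mono)
      hence "rho * (1 - \<alpha>) * b \<le> (1 - \<alpha>) * a" by (simp add: algebra_simps)
      then show ?thesis unfolding Q_def P_def using ap b0 by (simp add: divide_simps mult.commute)
    qed
    have e1: "\<alpha> + rho * (1 - \<alpha>) = a" "\<alpha> * rho + 1 - \<alpha> = b" "rho * \<alpha> + 1 - \<alpha> = b"
      unfolding a_def b_def by simp_all
    have e2: "r * rho / a = rho * x" "rho * r / a = rho * x" "rho * (1 - r) / b = rho * y"
      unfolding x_def y_def by simp_all
    have "q_BB r rho \<alpha> = (y / (rho * x + y)) * P + (rho * x / (rho * x + y)) * Q"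
      unfolding q_BB_def p_in_BB_def p_in_BR_def p_out_BB_def p_out_RB_def D_B_def e1 e2
      unfolding x_def[symmetric] y_def[symmetric] P_def[symmetric] Q_def[symmetric] by simp
    also have "\<dots> = (y * P + rho * x * Q) / (rho * x + y)" by (simp add: add_divide_distrib)
    finally have h1: "q_BB r rho \<alpha> = (y * P + rho * x * Q) / (rho * x + y)" .
    have "q_RB r rho \<alpha> = (rho * y / (x + rho * y)) * P + (x / (x + rho * y)) * Q"
      unfolding q_RB_def p_in_RR_def p_in_RB_def p_out_BB_def p_out_RB_def D_R_def e1 e2
      unfolding x_def[symmetric] y_def[symmetric] P_def[symmetric] Q_def[symmetric] by simp
    also have "\<dots> = (rho * y * P + x * Q) / (x + rho * y)" by (simp add: add_divide_distrib)
    finally have h2: "q_RB r rho \<alpha> = (rho * y * P + x * Q) / (x + rho * y)" .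
    show ?thesis unfolding h1 h2 using avg_lemma[OF x0 y0 assms(3,4) QP Q0] by simp
  qed
  show ?thesis unfolding MF_B_def MF_R_def using q sb by (simp add: mult_right_mono)
qed

end
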